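(* Fix $\beta>0$ and $\delta\in(0,\pi)$. Let $\rho_\varepsilon(\varphi)$ and $d_\varepsilon(\varphi)$ be families of real $2\pi$-periodic functions, depending smoothly on $(\varepsilon,\varphi)$, such that for every $\varepsilon$ and every $\bar\varphi$ $$\int_{\bar\varphi-d_\varepsilon(\bar\varphi)}^{\bar\varphi+d_\varepsilon(\bar\varphi)}\rho_\varepsilon(\xi)e^{i\xi}\,d\xi=\frac{2}{\beta}\sin\big(\delta+d_\varepsilon(\bar\varphi)\big)e^{i\bar\varphi},$$ and such that $\rho_0\equiv1$ and $d_0$ is a constant. Let $\rho_1=\frac{d}{d\varepsilon}\big|_{\varepsilon=0}\rho_\varepsilon$ and $d_1=\frac{d}{d\varepsilon}\big|_{\varepsilon=0}d_\varepsilon$. Then: (a) $\beta\sin d_0=\sin(\delta+d_0)$; (b) the Fourier coefficients $\widehat{\rho}_{1n}$ of $\rho_1$ and $\widehat{d}_{1n}$ of $d_1$ all vanish except for those $n$ which satisfy the Gutkin relation $n\tan(d_0)=\tan(nd_0)$.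
   Context: The displayed equation is the analytic form of the $\delta$-Gutkin property of a magnetic billiard (Larmor radius $1/\beta$) whose boundary has radius of curvature $\rho$ as a function of the tangent angle; $\rho_0\equiv 1$, $d_0$ constant corresponds to the unit circle. *)

theory Defs
  imports "HOL-Analysis.Analysis"
begin

text \<open>Taken coinductively, this says that partial derivatives of all orders exist on S.\<close>
coinductive smooth2_on :: "(real \<times> real) set \<Rightarrow> (real \<times> real \<Rightarrow> real) \<Rightarrow> bool" where
  "open S \<Longrightarrow>
   (\<forall>z\<in>S. (f has_derivative (\<lambda>h. fst h * g1 z + snd h * g2 z)) (at z)) \<Longrightarrow>
   smooth2_on S g1 \<Longrightarrow> smooth2_on S g2 \<Longrightarrow> smooth2_on S f"

definition oint :: "real \<Rightarrow> real \<Rightarrow> (real \<Rightarrow> complex) \<Rightarrow> complex" where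
  "oint a b f = (if a \<le> b then integral {a..b} f else - integral {b..a} f)"

definition fourier_coeff :: "(real \<Rightarrow> real) \<Rightarrow> int \<Rightarrow> complex" where
  "fourier_coeff f n =
     integral {0..2*pi} (\<lambda>x. complex_of_real (f x) * exp (- \<i> * of_int n * of_real x)) / (2 * pi)"

end

theory Submission imports Defs begin

lemma smooth2_D:
  assumes "smooth2_on S f"
  obtains g1 g2 where "open S" "\<forall>z\<in>S. (f has_derivative (\<lambda>h. fst h * g1 z + snd h * g2 z)) (at z)"
    "smooth2_on S g1" "smooth2_on S g2"
  using assms by (cases rule: smooth2_on.cases) auto

lemma smooth2_cont:
  assumes "smooth2_on S f" shows "continuous_on S f"
proof -
  obtain g1 g2 where "open S" "\<forall>z\<in>S. (f has_derivative (\<lambda>h. fst h * g1 z + snd h * g2 z)) (at z)"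
    using smooth2_D[OF assms] by blast
  then show ?thesis
    by (metis continuous_at_imp_continuous_on has_derivative_continuous)
qed

lemma chain2:
  fixes F :: "real \<Rightarrow> real \<Rightarrow> real"
  assumes F: "((\<lambda>(e,x). F e x) has_derivative (\<lambda>h. fst h * a + snd h * b)) (at (u t, v t))"
    and u: "(u has_real_derivative u') (at t within T)"
    and v: "(v has_real_derivative v') (at t within T)"
  shows "((\<lambda>t. F (u t) (v t)) has_real_derivative (u' * a + v' * b)) (at t within T)"
proof -
  have uv: "((\<lambda>t. (u t, v t)) has_derivative (\<lambda>h. (u' * h, v' * h))) (at t within T)"
    using u v unfolding has_field_derivative_def by (intro has_derivative_Pair) auto
  have "(((\<lambda>(e,x). F e x) \<circ> (\<lambda>t. (u t, v t))) has_derivative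
      ((\<lambda>h. fst h * a + snd h * b) \<circ> (\<lambda>h. (u' * h, v' * h)))) (at t within T)"
    by (rule diff_chain_within[OF uv]) (rule has_derivative_subset[OF F], simp)
  moreover have "((\<lambda>h. fst h * a + snd h * b) \<circ> (\<lambda>h. (u' * h, v' * h))) = (*) (u' * a + v' * b)"
    by (auto simp: fun_eq_iff algebra_simps)
  ultimately show ?thesis
    unfolding has_field_derivative_def by (simp add: o_def)
qed

lemma expi_deriv:
  assumes "(y has_real_derivative y') (at t within T)"
  shows "((\<lambda>t. exp (\<i> * complex_of_real (y t))) has_vector_derivative
     (exp (\<i> * complex_of_real (y t)) * (\<i> * complex_of_real y'))) (at t within T)"
proof -
  have 1: "((\<lambda>t. complex_of_real (y t)) has_vector_derivative complex_of_real y') (at t within T)"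
    using assms by (rule has_vector_derivative_of_real)
  have 2: "((\<lambda>z. exp (\<i> * z)) has_field_derivative exp (\<i> * complex_of_real (y t)) * \<i>)
      (at (complex_of_real (y t)) within (\<lambda>t. complex_of_real (y t)) ` T)"
    by (auto intro!: derivative_eq_intros)
  show ?thesis
    using field_vector_diff_chain_within[OF 1 2] by (simp add: o_def ac_simps)
qed

lemma oint_scale:
  fixes f :: "real \<Rightarrow> complex"
  assumes f: "continuous_on UNIV f"
  shows "((\<lambda>t. complex_of_real s * f (\<phi> + s * t)) has_integral oint (\<phi> - s) (\<phi> + s) f) {-1..1}"
proof -
  have "((\<lambda>t. s *\<^sub>R f (\<phi> + s * t)) has_integral
      (integral {\<phi> + s * (-1)..\<phi> + s * 1} f - integral {\<phi> + s * 1..\<phi> + s * (-1)} f)) {-1..1}"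
  proof (rule has_integral_substitution_general[of "{}" "-1" 1 "\<lambda>t. \<phi> + s * t" "\<phi> - \<bar>s\<bar>" "\<phi> + \<bar>s\<bar>" f "\<lambda>_. s"])
    show "(\<lambda>t. \<phi> + s * t) ` {- 1..1} \<subseteq> {\<phi> - \<bar>s\<bar>..\<phi> + \<bar>s\<bar>}"
    proof
      fix y assume "y \<in> (\<lambda>t. \<phi> + s * t) ` {- 1..1}"
      then obtain t where t: "t \<in> {-1..1}" "y = \<phi> + s * t" by auto
      have "\<bar>s * t\<bar> \<le> \<bar>s\<bar>" using t(1) by (auto simp: abs_mult intro: mult_left_le)
      then show "y \<in> {\<phi> - \<bar>s\<bar>..\<phi> + \<bar>s\<bar>}" using t(2) by auto
    qed
  qed (auto intro!: continuous_on_subset[OF f] derivative_eq_intros continuous_intros)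
  moreover have "integral {\<phi> + s * (-1)..\<phi> + s * 1} f - integral {\<phi> + s * 1..\<phi> + s * (-1)} f
      = oint (\<phi> - s) (\<phi> + s) f"
    by (cases "s = 0"; auto simp: oint_def)
  ultimately show ?thesis by (simp add: scaleR_conv_of_real)
qed

lemma periodic_shift:
  fixes g :: "real \<Rightarrow> complex"
  assumes g: "continuous_on UNIV g" and per: "\<And>x. g (x + 2*pi) = g x"
  shows "integral {0..2*pi} (\<lambda>x. g (x + a)) = integral {0..2*pi} g"
proof -
  define M where "M = \<bar>a\<bar> + 1"
  define P where "P u = integral {-M..u} g" for u
  define \<Psi> where "\<Psi> b = P (b + 2*pi) - P b" for b
  have M: "M > 0" "a \<in> {-M..M}" "0 \<in> {-M..M}" by (auto simp: M_def)
  have PD: "(P has_vector_derivative g u) (at u within {-M..M+2*pi})" if "u \<in> {-M..M+2*pi}" for u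
    unfolding P_def by (rule integral_has_vector_derivative[OF continuous_on_subset[OF g] that]) auto
  have "(\<Psi> has_vector_derivative 0) (at b within {-M..M})" if b: "b \<in> {-M..M}" for b
  proof -
    have 1: "((\<lambda>b. b + 2*pi) has_vector_derivative 1) (at b within {-M..M})"
      by (auto intro!: derivative_eq_intros)
    have sub: "(\<lambda>b. b + 2*pi) ` {-M..M} \<subseteq> {-M..M+2*pi}"
    proof
      fix y assume "y \<in> (\<lambda>b. b + 2*pi) ` {-M..M}"
      then obtain c where "c \<in> {-M..M}" "y = c + 2*pi" by blast
      then show "y \<in> {-M..M+2*pi}" using pi_gt_zero by (smt (verit) atLeastAtMost_iff)
    qed
    have bb1: "b + 2*pi \<in> {-M..M+2*pi}" using b pi_gt_zero by (smt (verit) atLeastAtMost_iff)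
    have bb2: "b \<in> {-M..M+2*pi}" using b pi_gt_zero by (smt (verit) atLeastAtMost_iff)
    have bb3: "{-M..M} \<subseteq> {-M..M+2*pi}" using pi_gt_zero by (intro atLeastatMost_subset_iff[THEN iffD2]) simp
    note bb = bb1 bb2 bb3
    have 2: "(P has_vector_derivative g (b + 2*pi)) (at (b + 2*pi) within (\<lambda>b. b + 2*pi) ` {-M..M})"
      by (rule has_vector_derivative_within_subset[OF PD[OF bb(1)] sub])
    have 3: "(P has_vector_derivative g b) (at b within {-M..M})"
      by (rule has_vector_derivative_within_subset[OF PD[OF bb(2)] bb(3)])
    have "(\<Psi> has_vector_derivative (1 *\<^sub>R g (b + 2*pi) - g b)) (at b within {-M..M})"
      unfolding \<Psi>_def using vector_diff_chain_within[OF 1 2] 3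
      by (auto intro!: derivative_eq_intros simp: o_def)
    then show ?thesis using per by simp
  qed
  then obtain c where c: "\<forall>x\<in>{-M..M}. \<Psi> x = c"
    using has_vector_derivative_zero_constant[of "{-M..M}" \<Psi>] by (metis convex_real_interval(5))
  have \<Psi>: "\<Psi> b = integral {b..b + 2*pi} g" if "b \<in> {-M..M}" for b
  proof -
    have "integral {-M..b} g + integral {b..b + 2*pi} g = integral {-M..b + 2*pi} g"
    proof (rule Henstock_Kurzweil_Integration.integral_combine)
      show "- M \<le> b" "b \<le> b + 2 * pi" using that pi_gt_zero by auto
    qed (auto intro!: integrable_continuous_real continuous_on_subset[OF g])
    then show ?thesis unfolding \<Psi>_def P_def by (simp add: algebra_simps)
  qed
  have "integral {0..2*pi} (\<lambda>x. g (x + a)) = integral {a..a + 2*pi} g"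
    using integral_shift_real_ivl[of a a "a + 2*pi" g] by simp
  also have "\<dots> = \<Psi> a" using \<Psi> M by simp
  also have "\<dots> = \<Psi> 0" using c M by simp
  also have "\<dots> = integral {0..2*pi} g" using \<Psi> M by simp
  finally show ?thesis .
qed

lemma expi_real: "exp (\<i> * complex_of_real x) = Complex (cos x) (sin x)"
  by (simp add: cis.code cis_conv_exp[symmetric])

lemma E1: "integral {-1..1} (\<lambda>t. complex_of_real d0 * exp (\<i> * complex_of_real (\<phi> + d0 * t)))
    = complex_of_real (2 * sin d0) * exp (\<i> * complex_of_real \<phi>)"
proof -
  define F where "F t = - \<i> * exp (\<i> * complex_of_real (\<phi> + d0 * t))" for t
  have "((\<lambda>t. complex_of_real d0 * exp (\<i> * complex_of_real (\<phi> + d0 * t))) has_integral (F 1 - F (-1))) {-1..1}"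
  proof (rule fundamental_theorem_of_calculus)
    fix t :: real
    have "((\<lambda>t. \<phi> + d0 * t) has_real_derivative d0) (at t within {-1..1})"
      by (auto intro!: derivative_eq_intros)
    from expi_deriv[OF this] show "(F has_vector_derivative complex_of_real d0 * exp (\<i> * complex_of_real (\<phi> + d0 * t))) (at t within {- 1..1})"
      unfolding F_def by (auto intro!: derivative_eq_intros simp: algebra_simps)
  qed simp
  then have "integral {-1..1} (\<lambda>t. complex_of_real d0 * exp (\<i> * complex_of_real (\<phi> + d0 * t))) = F 1 - F (-1)"
    by (rule integral_unique)
  moreover have "F 1 - F (-1) = complex_of_real (2 * sin d0) * exp (\<i> * complex_of_real \<phi>)"
    unfolding F_def expi_real
    by (simp add: complex_eq_iff sin_add cos_add sin_diff cos_diff algebra_simps)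
  ultimately show ?thesis by simp
qed

lemma E2: "integral {-1..1} (\<lambda>t. (1 + \<i> * complex_of_real (d0 * t)) * exp (\<i> * complex_of_real (\<phi> + d0 * t)))
    = complex_of_real (2 * cos d0) * exp (\<i> * complex_of_real \<phi>)"
proof -
  define F where "F t = complex_of_real t * exp (\<i> * complex_of_real (\<phi> + d0 * t))" for t
  have "((\<lambda>t. (1 + \<i> * complex_of_real (d0 * t)) * exp (\<i> * complex_of_real (\<phi> + d0 * t))) has_integral (F 1 - F (-1))) {-1..1}"
  proof (rule fundamental_theorem_of_calculus)
    fix t :: real
    have "((\<lambda>t. \<phi> + d0 * t) has_real_derivative d0) (at t within {-1..1})"
      by (auto intro!: derivative_eq_intros)
    from expi_deriv[OF this] show "(F has_vector_derivative (1 + \<i> * complex_of_real (d0 * t)) * exp (\<i> * complex_of_real (\<phi> + d0 * t))) (at t within {- 1..1})"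
      unfolding F_def by (auto intro!: derivative_eq_intros simp: algebra_simps)
  qed simp
  then have "integral {-1..1} (\<lambda>t. (1 + \<i> * complex_of_real (d0 * t)) * exp (\<i> * complex_of_real (\<phi> + d0 * t))) = F 1 - F (-1)"
    by (rule integral_unique)
  moreover have "F 1 - F (-1) = complex_of_real (2 * cos d0) * exp (\<i> * complex_of_real \<phi>)"
    unfolding F_def expi_real
    by (simp add: complex_eq_iff sin_add cos_add sin_diff cos_diff algebra_simps)
  ultimately show ?thesis by simp
qed

lemma E3:
  fixes k :: int and d0 :: real
  shows "complex_of_real d0 * integral {-1..1} (\<lambda>t. exp (\<i> * complex_of_real (k * d0 * t)))
    = complex_of_real (if k = 0 then 2 * d0 else 2 * sin (k * d0) / k)"
proof (cases "k = 0")
  case True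
  then show ?thesis by (simp add: scaleR_conv_of_real)
next
  case False
  define F where "F t = - \<i> * exp (\<i> * complex_of_real (k * d0 * t)) / of_int k" for t
  have "((\<lambda>t. complex_of_real d0 * exp (\<i> * complex_of_real (k * d0 * t))) has_integral (F 1 - F (-1))) {-1..1}"
  proof (rule fundamental_theorem_of_calculus)
    fix t :: real
    have "((\<lambda>t. k * d0 * t) has_real_derivative k * d0) (at t within {-1..1})"
      by (auto intro!: derivative_eq_intros)
    from expi_deriv[OF this] show "(F has_vector_derivative complex_of_real d0 * exp (\<i> * complex_of_real (k * d0 * t))) (at t within {- 1..1})"
      unfolding F_def using False by (auto intro!: derivative_eq_intros simp: algebra_simps)
  qed simp
  then have "integral {-1..1} (\<lambda>t. complex_of_real d0 * exp (\<i> * complex_of_real (k * d0 * t))) = F 1 - F (-1)"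
    by (rule integral_unique)
  moreover have "F 1 - F (-1) = complex_of_real (2 * sin (k * d0) / k)"
    unfolding F_def expi_real using False
    by (simp add: complex_eq_iff algebra_simps Complex_eq divide_simps)
  ultimately show ?thesis using False by simp
qed

definition wfun :: "real \<Rightarrow> int \<Rightarrow> real" where
  "wfun d k = (if k = 0 then 2 * d else 2 * sin (real_of_int k * d) / real_of_int k)"

lemma gutkin_real:
  fixes m :: int and d :: real
  assumes "wfun d (1 - m) = wfun d (1 + m)"
  shows "real_of_int m * tan d = tan (real_of_int m * d)"
proof -
  consider "m = 1" | "m = -1" | "m = 0" | "m \<noteq> 1 \<and> m \<noteq> -1 \<and> m \<noteq> 0" by blast
  then show ?thesis
  proof cases
    case 4
    then have ne: "1 - m \<noteq> 0" "1 + m \<noteq> 0" "real_of_int (1 - m) \<noteq> 0" "real_of_int (1 + m) \<noteq> 0"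
      by linarith+
    have "2 * sin (real_of_int (1 - m) * d) / real_of_int (1 - m) = 2 * sin (real_of_int (1 + m) * d) / real_of_int (1 + m)"
      using assms ne unfolding wfun_def by simp
    then have "real_of_int (1 + m) * sin (real_of_int (1 - m) * d) = real_of_int (1 - m) * sin (real_of_int (1 + m) * d)"
      using ne by (simp add: field_simps)
    then have "(1 + m) * sin (d - m * d) = (1 - m) * sin (d + m * d)"
      by (simp add: algebra_simps)
    then have key: "m * sin d * cos (m * d) = cos d * sin (m * d)"
      by (simp add: sin_diff sin_add algebra_simps)
    show ?thesis
    proof (cases "cos d = 0")
      case True
      then have "sin d \<noteq> 0" using sin_cos_squared_add[of d] by auto
      then have "cos (m * d) = 0" using key True 4 by simp
      then show ?thesis using True by (simp add: tan_def)
    next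
      case False
      show ?thesis
      proof (cases "cos (m * d) = 0")
        case True
        then have "sin (m * d) = 0" using key False by simp
        then show ?thesis using True sin_cos_squared_add[of "m * d"] by simp
      next
        case False2: False
        show ?thesis unfolding tan_def using key False False2 by (simp add: field_simps)
      qed
    qed
  qed (auto simp: tan_def)
qed

lemma C_ne:
  assumes "\<beta> > 0" "0 < \<delta>" "\<delta> < pi" "\<beta> * sin d0 = sin (\<delta> + d0)"
  shows "2 / \<beta> * cos (\<delta> + d0) - 2 * cos d0 \<noteq> 0"
proof
  assume "2 / \<beta> * cos (\<delta> + d0) - 2 * cos d0 = 0"
  then have c: "cos (\<delta> + d0) = \<beta> * cos d0" using assms(1) by (simp add: field_simps)
  have "sin \<delta> = sin ((\<delta> + d0) - d0)" by simp
  also have "\<dots> = 0" unfolding sin_diff c assms(4)[symmetric] by simp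
  finally show False using sin_gt_zero[OF assms(2,3)] by simp
qed

lemma fc_conj: "fourier_coeff f (-n) = cnj (fourier_coeff f n)"
  unfolding fourier_coeff_def by (simp add: integral_cnj exp_cnj)


theorem proposition3p4:
  fixes \<beta> \<delta> \<epsilon>0 d0 :: real
    and \<rho> d :: "real \<Rightarrow> real \<Rightarrow> real"
  assumes beta_pos: "\<beta> > 0"
    and delta: "0 < \<delta>" "\<delta> < pi"
    and eps0: "\<epsilon>0 > 0"
    and smooth_rho: "smooth2_on ({-\<epsilon>0<..<\<epsilon>0} \<times> UNIV) (\<lambda>(e, x). \<rho> e x)"
    and smooth_d: "smooth2_on ({-\<epsilon>0<..<\<epsilon>0} \<times> UNIV) (\<lambda>(e, x). d e x)"
    and per_rho: "\<And>e x. \<bar>e\<bar> < \<epsilon>0 \<Longrightarrow> \<rho> e (x + 2*pi) = \<rho> e x"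
    and per_d: "\<And>e x. \<bar>e\<bar> < \<epsilon>0 \<Longrightarrow> d e (x + 2*pi) = d e x"
    and gutkin: "\<And>e \<phi>. \<bar>e\<bar> < \<epsilon>0 \<Longrightarrow>
        oint (\<phi> - d e \<phi>) (\<phi> + d e \<phi>) (\<lambda>\<xi>. complex_of_real (\<rho> e \<xi>) * exp (\<i> * of_real \<xi>))
        = complex_of_real (2 / \<beta> * sin (\<delta> + d e \<phi>)) * exp (\<i> * of_real \<phi>)"
    and rho0: "\<And>x. \<rho> 0 x = 1"
    and d0: "\<And>x. d 0 x = d0"
  shows "\<beta> * sin d0 = sin (\<delta> + d0) \<and>
    (\<forall>n::int. real_of_int n * tan d0 \<noteq> tan (real_of_int n * d0) \<longrightarrow>
        fourier_coeff (\<lambda>x. deriv (\<lambda>e. \<rho> e x) 0) n = 0 \<and>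
        fourier_coeff (\<lambda>x. deriv (\<lambda>e. d e x) 0) n = 0)"
proof -
  define U where "U = {-\<epsilon>0<..<\<epsilon>0}"
  define S where "S = U \<times> (UNIV::real set)"
  have openU: "open U" unfolding U_def by simp
  have U0: "0 \<in> U" using eps0 unfolding U_def by simp
  have convU: "convex U" unfolding U_def by simp
  have UA: "\<bar>e\<bar> < \<epsilon>0" if "e \<in> U" for e using that unfolding U_def by auto
  have inS: "(e, x) \<in> S" if "e \<in> U" for e x using that unfolding S_def by simp
  obtain r1 r2 where rD: "\<forall>z\<in>S. ((\<lambda>(e, x). \<rho> e x) has_derivative (\<lambda>h. fst h * r1 z + snd h * r2 z)) (at z)"
      and r1s: "smooth2_on S r1" and r2s: "smooth2_on S r2"
    using smooth2_D[OF smooth_rho[folded U_def, folded S_def]] by metis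
  obtain q1 q2 where qD: "\<forall>z\<in>S. ((\<lambda>(e, x). d e x) has_derivative (\<lambda>h. fst h * q1 z + snd h * q2 z)) (at z)"
      and q1s: "smooth2_on S q1"
    using smooth2_D[OF smooth_d[folded U_def, folded S_def]] by metis
  have r1c: "continuous_on S r1" "continuous_on S r2" "continuous_on S q1"
    using r1s r2s q1s by (auto intro: smooth2_cont)
  have rc: "continuous_on S (\<lambda>(e, x). \<rho> e x)" "continuous_on S (\<lambda>(e, x). d e x)"
    using smooth_rho smooth_d unfolding S_def U_def by (auto intro: smooth2_cont)
  have pr: "((\<lambda>e. \<rho> e (v e)) has_real_derivative (r1 (e, v e) + v' * r2 (e, v e))) (at e within T)"
    if "e \<in> U" "(v has_real_derivative v') (at e within T)" for e v v' T
    using chain2[where F=\<rho> and a="r1 (e, v e)" and b="r2 (e, v e)" and u="\<lambda>e. e" and t=e and v=v and T=T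
        and u'=1 and v'=v'] rD inS[OF that(1)] that(2)
    by (auto intro!: derivative_eq_intros)
  have pd: "((\<lambda>e. d e (v e)) has_real_derivative (q1 (e, v e) + v' * q2 (e, v e))) (at e within T)"
    if "e \<in> U" "(v has_real_derivative v') (at e within T)" for e v v' T
    using chain2[where F=d and a="q1 (e, v e)" and b="q2 (e, v e)" and u="\<lambda>e. e" and t=e and v=v and T=T
        and u'=1 and v'=v'] qD inS[OF that(1)] that(2)
    by (auto intro!: derivative_eq_intros)
  have r2zero: "r2 (0, x) = 0" for x
  proof -
    have "((\<lambda>x. \<rho> 0 x) has_real_derivative (0 * r1 (0, x) + 1 * r2 (0, x))) (at x)"
      using chain2[where F=\<rho> and u="\<lambda>_. 0" and v="\<lambda>x. x" and t=x and T=UNIV and u'=0 and v'=1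
          and a = "r1 (0, x)" and b="r2 (0, x)"] rD inS[OF U0]
      by (auto intro!: derivative_eq_intros)
    moreover have "((\<lambda>x. \<rho> 0 x) has_real_derivative 0) (at x)" using rho0 by simp
    ultimately show ?thesis using DERIV_unique by fastforce
  qed
  define \<rho>1 where "\<rho>1 x = r1 (0, x)" for x
  define D where "D x = q1 (0, x)" for x
  have dr: "((\<lambda>e. \<rho> e x) has_real_derivative \<rho>1 x) (at 0)" for x
    using pr[OF U0, of "\<lambda>_. x" 0 UNIV] by (simp add: \<rho>1_def)
  have dd: "((\<lambda>e. d e x) has_real_derivative D x) (at 0)" for x
    using pd[OF U0, of "\<lambda>_. x" 0 UNIV] by (simp add: D_def)
  have per1: "\<rho>1 (x + 2*pi) = \<rho>1 x" for x
  proof -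
    have "((\<lambda>e. \<rho> e (x + 2*pi)) has_real_derivative \<rho>1 x) (at 0)"
      by (rule has_field_derivative_transform_within_open[OF dr openU U0]) (simp add: per_rho UA)
    then show ?thesis using dr DERIV_unique by blast
  qed
  have perD: "D (x + 2*pi) = D x" for x
  proof -
    have "((\<lambda>e. d e (x + 2*pi)) has_real_derivative D x) (at 0)"
      by (rule has_field_derivative_transform_within_open[OF dd openU U0]) (simp add: per_d UA)
    then show ?thesis using dd DERIV_unique by blast
  qed
  have c1: "continuous_on UNIV \<rho>1" "continuous_on UNIV D"
    unfolding \<rho>1_def D_def
    by (auto intro!: continuous_on_compose2[OF r1c(1)] continuous_on_compose2[OF r1c(3)] continuous_intros
        simp: inS U0)
  have deriv_eq: "(\<lambda>x. deriv (\<lambda>e. \<rho> e x) 0) = \<rho>1" "(\<lambda>x. deriv (\<lambda>e. d e x) 0) = D"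
    using dr dd by (auto simp: fun_eq_iff DERIV_imp_deriv)
  define C where "C = 2 / \<beta> * cos (\<delta> + d0) - 2 * cos d0"
  define L where "L \<phi> = integral {-1..1} (\<lambda>t. complex_of_real (\<rho>1 (\<phi> + d0 * t)) * exp (\<i> * complex_of_real (\<phi> + d0 * t)))" for \<phi>
  have HI: "((\<lambda>t. complex_of_real (d e \<phi> * \<rho> e (\<phi> + d e \<phi> * t)) * exp (\<i> * complex_of_real (\<phi> + d e \<phi> * t)))
       has_integral (complex_of_real (2 / \<beta> * sin (\<delta> + d e \<phi>)) * exp (\<i> * complex_of_real \<phi>))) {-1..1}"
     if "e \<in> U" for e \<phi>
  proof -
    have fc: "continuous_on UNIV (\<lambda>\<xi>. complex_of_real (\<rho> e \<xi>) * exp (\<i> * complex_of_real \<xi>))"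
      by (auto intro!: continuous_on_compose2[OF rc(1), of UNIV "\<lambda>\<xi>. (e, \<xi>)", simplified] continuous_intros
          simp: inS that)
    from oint_scale[OF fc, of "d e \<phi>" \<phi>] gutkin[OF UA[OF that], of \<phi>]
    show ?thesis by (simp add: mult.assoc)
  qed
  have partA: "\<beta> * sin d0 = sin (\<delta> + d0)"
  proof -
    have "integral {-1..1} (\<lambda>t. complex_of_real d0 * exp (\<i> * complex_of_real (0 + d0 * t)))
       = complex_of_real (2 / \<beta> * sin (\<delta> + d0))"
      using integral_unique[OF HI[OF U0, of 0]] by (simp add: rho0 d0)
    then have "complex_of_real (2 * sin d0) = complex_of_real (2 / \<beta> * sin (\<delta> + d0))"
      using E1[of d0 0] by simp
    then have "2 * sin d0 = 2 / \<beta> * sin (\<delta> + d0)" by (simp only: of_real_eq_iff)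
    then show ?thesis using beta_pos by (simp add: field_simps)
  qed
  have ident: "complex_of_real d0 * L \<phi> = complex_of_real (C * D \<phi>) * exp (\<i> * complex_of_real \<phi>)" for \<phi>
  proof -
    define y where "y e t = \<phi> + d e \<phi> * t" for e t
    define K where "K e t = complex_of_real (d e \<phi> * \<rho> e (y e t)) * exp (\<i> * complex_of_real (y e t))" for e t
    define Kd where "Kd e t = complex_of_real (d e \<phi> * \<rho> e (y e t)) * (exp (\<i> * complex_of_real (y e t)) * (\<i> * complex_of_real (q1 (e, \<phi>) * t)))
        + complex_of_real (d e \<phi> * (r1 (e, y e t) + q1 (e, \<phi>) * t * r2 (e, y e t)) + q1 (e, \<phi>) * \<rho> e (y e t)) * exp (\<i> * complex_of_real (y e t))" for e t
    have dphi: "((\<lambda>e. d e \<phi>) has_real_derivative q1 (e, \<phi>)) (at e within U)" if "e \<in> U" for e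
      using pd[OF that, of "\<lambda>_. \<phi>" 0 U] by simp
    have Kderiv: "((\<lambda>e. K e t) has_vector_derivative Kd e t) (at e within U)" if "e \<in> U" for e t
    proof -
      have yd: "((\<lambda>e. y e t) has_real_derivative q1 (e, \<phi>) * t) (at e within U)"
        unfolding y_def using dphi[OF that] by (auto intro!: derivative_eq_intros)
      have A: "((\<lambda>e. d e \<phi> * \<rho> e (y e t)) has_real_derivative
          d e \<phi> * (r1 (e, y e t) + q1 (e, \<phi>) * t * r2 (e, y e t)) + q1 (e, \<phi>) * \<rho> e (y e t)) (at e within U)"
        by (rule DERIV_mult'[OF dphi[OF that] pr[OF that yd]])
      show ?thesis unfolding K_def Kd_def
        by (rule has_vector_derivative_mult[OF has_vector_derivative_of_real[OF A] expi_deriv[OF yd]])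
    qed
    have cfst: "continuous_on (U \<times> UNIV) (\<lambda>p. (fst p, \<phi>))" by (intro continuous_intros)
    have cfstS: "(\<lambda>p. (fst p, \<phi>)) ` (U \<times> UNIV) \<subseteq> S" by (auto simp: inS)
    have cdphi: "continuous_on (U \<times> UNIV) (\<lambda>p. d (fst p) \<phi>)"
      using continuous_on_compose2[OF rc(2) cfst cfstS] by simp
    have cmap: "continuous_on (U \<times> UNIV) (\<lambda>p. (fst p, y (fst p) (snd p)))"
      unfolding y_def by (auto intro!: continuous_intros cdphi)
    have cmapS: "(\<lambda>p. (fst p, y (fst p) (snd p))) ` (U \<times> UNIV) \<subseteq> S" by (auto simp: inS)
    have cr: "continuous_on (U \<times> UNIV) (\<lambda>p. \<rho> (fst p) (y (fst p) (snd p)))"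
      using continuous_on_compose2[OF rc(1) cmap cmapS] by simp
    have cr1: "continuous_on (U \<times> UNIV) (\<lambda>p. r1 (fst p, y (fst p) (snd p)))"
      using continuous_on_compose2[OF r1c(1) cmap cmapS] by simp
    have cr2: "continuous_on (U \<times> UNIV) (\<lambda>p. r2 (fst p, y (fst p) (snd p)))"
      using continuous_on_compose2[OF r1c(2) cmap cmapS] by simp
    have cq1: "continuous_on (U \<times> UNIV) (\<lambda>p. q1 (fst p, \<phi>))"
      using continuous_on_compose2[OF r1c(3) cfst cfstS] by simp
    have cy: "continuous_on (U \<times> UNIV) (\<lambda>p. y (fst p) (snd p))"
      unfolding y_def by (auto intro!: continuous_intros cdphi)
    have cKd: "continuous_on (U \<times> UNIV) (\<lambda>p. Kd (fst p) (snd p))"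
      unfolding Kd_def
      by (intro continuous_intros cdphi cr cr1 cr2 cq1 cy)
    have cKd': "continuous_on (U \<times> cbox (-1) 1) (\<lambda>(e, t). Kd e t)"
      using continuous_on_subset[OF cKd, of "U \<times> cbox (-1) 1"] by (auto simp: case_prod_beta')
    have Kint: "K e integrable_on cbox (-1) 1" if "e \<in> U" for e
      using HI[OF that, of \<phi>] unfolding K_def y_def by (auto simp: integrable_on_def)
    have LR: "((\<lambda>e. integral (cbox (-1) 1) (K e)) has_vector_derivative integral (cbox (-1) 1) (Kd 0)) (at 0 within U)"
      by (rule leibniz_rule_vector_derivative[OF Kderiv Kint cKd' U0 convU])
    then have LR': "((\<lambda>e. integral {-1..1} (K e)) has_vector_derivative integral {-1..1} (Kd 0)) (at 0)"
      using at_within_open[OF U0 openU] by simp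
    have G: "((\<lambda>e. complex_of_real (2 / \<beta> * sin (\<delta> + d e \<phi>)) * exp (\<i> * complex_of_real \<phi>)) has_vector_derivative
        integral {-1..1} (Kd 0)) (at 0)"
    proof (rule has_vector_derivative_transform_within_open[OF LR' openU U0])
      fix e assume "e \<in> U"
      from integral_unique[OF HI[OF this, of \<phi>]]
      show "integral {-1..1} (K e) = complex_of_real (2 / \<beta> * sin (\<delta> + d e \<phi>)) * exp (\<i> * complex_of_real \<phi>)"
        unfolding K_def y_def .
    qed
    have G2: "((\<lambda>e. complex_of_real (2 / \<beta> * sin (\<delta> + d e \<phi>)) * exp (\<i> * complex_of_real \<phi>)) has_vector_derivative
        complex_of_real (2 / \<beta> * (cos (\<delta> + d0) * D \<phi>)) * exp (\<i> * complex_of_real \<phi>)) (at 0)"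
    proof -
      have "((\<lambda>e. 2 / \<beta> * sin (\<delta> + d e \<phi>)) has_real_derivative 2 / \<beta> * (cos (\<delta> + d0) * D \<phi>)) (at 0)"
        using dd[of \<phi>] beta_pos by (auto intro!: derivative_eq_intros simp: d0)
      from has_vector_derivative_mult[OF has_vector_derivative_of_real[OF this] has_vector_derivative_const[of "exp (\<i> * complex_of_real \<phi>)"]]
      show ?thesis by (simp add: d0)
    qed
    have eqd: "integral {-1..1} (Kd 0) = complex_of_real (2 / \<beta> * (cos (\<delta> + d0) * D \<phi>)) * exp (\<i> * complex_of_real \<phi>)"
      using vector_derivative_unique_at[OF G G2] .
    have Kd0: "Kd 0 t = complex_of_real d0 * (complex_of_real (\<rho>1 (\<phi> + d0 * t)) * exp (\<i> * complex_of_real (\<phi> + d0 * t)))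
       + complex_of_real (D \<phi>) * ((1 + \<i> * complex_of_real (d0 * t)) * exp (\<i> * complex_of_real (\<phi> + d0 * t)))" for t
      unfolding Kd_def y_def by (simp add: d0 rho0 r2zero \<rho>1_def D_def algebra_simps)
    have i1: "(\<lambda>t. complex_of_real (\<rho>1 (\<phi> + d0 * t)) * exp (\<i> * complex_of_real (\<phi> + d0 * t))) integrable_on {-1..1}"
      by (intro integrable_continuous_real continuous_intros continuous_on_compose2[OF c1(1)]) auto
    have i2: "(\<lambda>t. (1 + \<i> * complex_of_real (d0 * t)) * exp (\<i> * complex_of_real (\<phi> + d0 * t))) integrable_on {-1..1}"
      by (intro integrable_continuous_real continuous_intros)
    have "integral {-1..1} (Kd 0) = complex_of_real d0 * L \<phi> + complex_of_real (D \<phi>) * (complex_of_real (2 * cos d0) * exp (\<i> * complex_of_real \<phi>))"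
      unfolding Kd0 L_def E2[symmetric]
      by (subst integral_add[OF integrable_on_mult_right[OF i1] integrable_on_mult_right[OF i2]]) simp
    with eqd show ?thesis unfolding C_def by (simp add: algebra_simps)
  qed
  have FC: "complex_of_real (wfun d0 (n + 1)) * fourier_coeff \<rho>1 n = complex_of_real C * fourier_coeff D n" for n
  proof -
    define E where "E \<phi> = exp (- \<i> * of_int (n + 1) * complex_of_real \<phi>)" for \<phi>
    define g where "g x = complex_of_real (\<rho>1 x) * exp (- \<i> * of_int n * complex_of_real x)" for x
    define H where "H \<phi> t = complex_of_real (\<rho>1 (\<phi> + d0 * t)) * exp (\<i> * complex_of_real (\<phi> + d0 * t)) * E \<phi>" for \<phi> t
    have gc: "continuous_on UNIV g" unfolding g_def
      by (intro continuous_intros c1(1))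
    have gper: "g (x + 2*pi) = g x" for x
    proof -
      have "exp (- \<i> * of_int n * complex_of_real (x + 2*pi)) = exp (- \<i> * of_int n * complex_of_real x) * exp (- (2 * of_real pi * \<i>) * of_int n)"
        by (simp add: exp_add[symmetric] algebra_simps)
      also have "exp (- (2 * of_real pi * \<i>) * of_int n) = 1"
      proof -
        have eq: "- (2 * of_real pi * \<i>) * of_int n = \<i> * complex_of_real (- ((2 * pi) * of_int n))" by simp
        show ?thesis unfolding eq expi_real by (simp only: cos_minus sin_minus cos_int_2pin sin_int_2pin) (simp add: one_complex.code)
      qed
      finally show ?thesis unfolding g_def by (simp add: per1)
    qed
    have g2pi: "integral {0..2*pi} g = of_real (2 * pi) * fourier_coeff \<rho>1 n"
      unfolding fourier_coeff_def g_def by simp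
    have Hc: "continuous_on UNIV (\<lambda>(x, y). H x y)"
      unfolding H_def E_def case_prod_beta'
      by (intro continuous_intros continuous_on_compose2[OF c1(1)]) auto
    have inner: "integral {0..2*pi} (\<lambda>\<phi>. H \<phi> t) = exp (\<i> * complex_of_real (real_of_int (n + 1) * d0 * t)) * (of_real (2 * pi) * fourier_coeff \<rho>1 n)" for t
    proof -
      have "H \<phi> t = exp (\<i> * complex_of_real (real_of_int (n + 1) * d0 * t)) * g (\<phi> + d0 * t)" for \<phi>
      proof -
        have "exp (\<i> * complex_of_real (\<phi> + d0 * t)) * E \<phi> = exp (\<i> * complex_of_real (\<phi> + d0 * t) + (- \<i> * of_int (n + 1) * complex_of_real \<phi>))"
          unfolding E_def by (rule exp_add[symmetric])
        also have "\<dots> = exp (\<i> * complex_of_real (real_of_int (n + 1) * d0 * t) + (- \<i> * of_int n * complex_of_real (\<phi> + d0 * t)))"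
          by (rule arg_cong[where f=exp]) (simp add: algebra_simps)
        also have "\<dots> = exp (\<i> * complex_of_real (real_of_int (n + 1) * d0 * t)) * exp (- \<i> * of_int n * complex_of_real (\<phi> + d0 * t))"
          by (rule exp_add)
        finally show ?thesis unfolding H_def g_def by (simp add: ac_simps)
      qed
      then have "integral {0..2*pi} (\<lambda>\<phi>. H \<phi> t) = exp (\<i> * complex_of_real (real_of_int (n + 1) * d0 * t)) * integral {0..2*pi} (\<lambda>\<phi>. g (\<phi> + d0 * t))"
        by simp
      also have "integral {0..2*pi} (\<lambda>\<phi>. g (\<phi> + d0 * t)) = integral {0..2*pi} g"
        by (rule periodic_shift[OF gc gper])
      finally show ?thesis using g2pi by simp
    qed
    have "integral {0..2*pi} (\<lambda>\<phi>. complex_of_real d0 * L \<phi> * E \<phi>)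
        = complex_of_real d0 * integral {0..2*pi} (\<lambda>\<phi>. integral {-1..1} (\<lambda>t. H \<phi> t))"
    proof -
      have "L \<phi> * E \<phi> = integral {-1..1} (\<lambda>t. H \<phi> t)" for \<phi>
        unfolding L_def H_def by simp
      then show ?thesis by (simp add: mult.assoc)
    qed
    also have "integral {0..2*pi} (\<lambda>\<phi>. integral {-1..1} (\<lambda>t. H \<phi> t)) = integral {-1..1} (\<lambda>t. integral {0..2*pi} (\<lambda>\<phi>. H \<phi> t))"
      using integral_swap_continuous[of 0 "-1" "2*pi" 1 H] continuous_on_subset[OF Hc]
      by (simp add: cbox_interval)
    also have "\<dots> = integral {-1..1} (\<lambda>t. exp (\<i> * complex_of_real (real_of_int (n + 1) * d0 * t))) * (of_real (2 * pi) * fourier_coeff \<rho>1 n)"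
      unfolding inner by simp
    finally have "integral {0..2*pi} (\<lambda>\<phi>. complex_of_real d0 * L \<phi> * E \<phi>)
        = (complex_of_real d0 * integral {-1..1} (\<lambda>t. exp (\<i> * complex_of_real (real_of_int (n + 1) * d0 * t)))) * (of_real (2 * pi) * fourier_coeff \<rho>1 n)"
      by (simp only: mult.assoc)
    moreover have E3': "complex_of_real d0 * integral {-1..1} (\<lambda>t. exp (\<i> * complex_of_real (real_of_int (n + 1) * d0 * t)))
        = complex_of_real (wfun d0 (n + 1))"
      using E3[of d0 "n + 1"] unfolding wfun_def .
    ultimately have lhs: "integral {0..2*pi} (\<lambda>\<phi>. complex_of_real d0 * L \<phi> * E \<phi>)
        = complex_of_real (wfun d0 (n + 1)) * (of_real (2 * pi) * fourier_coeff \<rho>1 n)"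
      by simp
    have "integral {0..2*pi} (\<lambda>\<phi>. complex_of_real d0 * L \<phi> * E \<phi>)
        = integral {0..2*pi} (\<lambda>\<phi>. complex_of_real C * (complex_of_real (D \<phi>) * exp (- \<i> * of_int n * complex_of_real \<phi>)))"
    proof -
      have "complex_of_real d0 * L \<phi> * E \<phi> = complex_of_real C * (complex_of_real (D \<phi>) * exp (- \<i> * of_int n * complex_of_real \<phi>))" for \<phi>
      proof -
        have "exp (\<i> * complex_of_real \<phi>) * E \<phi> = exp (\<i> * complex_of_real \<phi> + (- \<i> * of_int (n + 1) * complex_of_real \<phi>))"
          unfolding E_def by (rule exp_add[symmetric])
        also have "\<dots> = exp (- \<i> * of_int n * complex_of_real \<phi>)"
          by (rule arg_cong[where f=exp]) (simp add: algebra_simps)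
        finally have "exp (\<i> * complex_of_real \<phi>) * E \<phi> = exp (- \<i> * of_int n * complex_of_real \<phi>)" .
        then show ?thesis unfolding ident by (simp add: ac_simps)
      qed
      then show ?thesis by simp
    qed
    also have "\<dots> = complex_of_real C * (of_real (2 * pi) * fourier_coeff D n)"
      unfolding fourier_coeff_def by simp
    finally show ?thesis using lhs by simp
  qed
  have Cne: "C \<noteq> 0" unfolding C_def by (rule C_ne[OF beta_pos delta partA])
  have partB: "fourier_coeff \<rho>1 n = 0 \<and> fourier_coeff D n = 0"
    if "real_of_int n * tan d0 \<noteq> tan (real_of_int n * d0)" for n
  proof -
    have w: "wfun d0 (1 - n) \<noteq> wfun d0 (1 + n)" using gutkin_real that by blast
    have a: "complex_of_real (wfun d0 (1 + n)) * fourier_coeff \<rho>1 n = complex_of_real C * fourier_coeff D n"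
      using FC[of n] by (simp add: add.commute)
    have "cnj (complex_of_real (wfun d0 (- n + 1)) * fourier_coeff \<rho>1 (-n)) = cnj (complex_of_real C * fourier_coeff D (-n))"
      using FC[of "-n"] by simp
    then have b: "complex_of_real (wfun d0 (1 - n)) * fourier_coeff \<rho>1 n = complex_of_real C * fourier_coeff D n"
      by (simp add: fc_conj)
    from a b have "complex_of_real (wfun d0 (1 - n) - wfun d0 (1 + n)) * fourier_coeff \<rho>1 n = 0"
      by (simp add: algebra_simps)
    then have r: "fourier_coeff \<rho>1 n = 0" using w by simp
    then show ?thesis using a Cne by simp
  qed
  show ?thesis using partA partB unfolding deriv_eq by blast
qed

end
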